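(* Let $\mathcal{P}=\{1,\dots,p\}$, let $M(1),\dots,M(p)\in\mathbb{R}^{n\times n}$ be exponentially stable (Hurwitz) matrices, and let $N\in\mathbb{R}^{n\times n}$ be a fixed matrix. Let $\tau_D>0$ and $\lambda>0$. Then there exists $g_0>0$ such that for every $g\ge g_0$ there is a constant $c>0$ such that, for every switching signal $\sigma\in\mathcal{S}(\tau_D)$ and every initial condition, the solution of $\dot x=\big(N+gM(\sigma(t))\big)x$ satisfies $\|x(t)\|\le c\,e^{-\lambda t}\|x(0)\|$ for all $t\ge0$.
   Context: A switching signal is a piecewise-constant, right-continuous map $\sigma:[0,\infty)\to\mathcal{P}$ with finitely many discontinuities on each bounded interval; $\mathcal{S}(\tau_D)$ is the set of switching signals whose consecutive discontinuity times $t_1<t_2<\cdots$ (with $t_0=0$) satisfy $t_{k+1}-t_k\ge\tau_D$ for all $k\ge0$. $\|\cdot\|$ is any vector norm (with induced matrix norm). *)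

theory Defs
  imports "HOL-Analysis.Analysis"
begin

definition cmat :: "real^'n^'n \<Rightarrow> complex^'n^'n" where
  "cmat A = (\<chi> i j. complex_of_real (A $ i $ j))"

definition hurwitz :: "real^'n^'n \<Rightarrow> bool" where
  "hurwitz A \<longleftrightarrow> (\<forall>(l::complex) (v::complex^'n). v \<noteq> 0 \<and> cmat A *v v = l *s v \<longrightarrow> Re l < 0)"

definition switch_times :: "(real \<Rightarrow> nat) \<Rightarrow> real set" where
  "switch_times \<sigma> = {t. t > 0 \<and> \<not> isCont \<sigma> t}"

text \<open>Switching signals with values in {1..p}: piecewise constant, right-continuous,
  finitely many discontinuities on each bounded interval, and dwell time at least tauD
  between consecutive discontinuity times (with t_0 = 0).\<close>
definition dwell_signals :: "nat \<Rightarrow> real \<Rightarrow> (real \<Rightarrow> nat) set" where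
  "dwell_signals p \<tau>D = {\<sigma>.
      (\<forall>t\<ge>0. \<sigma> t \<in> {1..p})
    \<and> (\<forall>t\<ge>0. (\<sigma> \<longlongrightarrow> \<sigma> t) (at_right t))
    \<and> (\<forall>T. finite (switch_times \<sigma> \<inter> {..T}))
    \<and> (\<forall>s\<in>insert 0 (switch_times \<sigma>). \<forall>t\<in>insert 0 (switch_times \<sigma>). s < t \<longrightarrow> \<tau>D \<le> t - s)}"

end

theory Submission
  imports Defs "Jordan_Normal_Form.Schur_Decomposition"
begin

no_notation vec_index (infixl "$" 100)
no_notation scalar_prod (infix "\<bullet>" 70)

lemma mult_entry:
  fixes X Y :: "'a::comm_ring_1 mat"
  assumes "X \<in> carrier_mat n n" "Y \<in> carrier_mat n n" "i < n" "j < n"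
  shows "(X*Y)$$(i,j) = (\<Sum>l<n. X$$(i,l)*Y$$(l,j))"
  using assms by (auto simp: scalar_prod_def lessThan_atLeast0 intro!: sum.cong)

lemma schur_ex:
  fixes A :: "complex mat"
  assumes A: "A \<in> carrier_mat n n"
  shows "\<exists>B P Q. similar_mat_wit A B P Q \<and> upper_triangular B \<and> B \<in> carrier_mat n n
     \<and> (\<forall>i<n. eigenvalue A (B$$(i,i)))"
proof -
  obtain es where es: "char_poly A = (\<Prod> a \<leftarrow> es. [:- a, 1:])" "length es = n"
    using char_poly_factorized[OF A] by auto
  obtain B P Q where sd: "schur_decomposition A es = (B,P,Q)" by (cases "schur_decomposition A es") auto
  from schur_decomposition[OF A es(1) sd] have s: "similar_mat_wit A B P Q" "upper_triangular B" "diag_mat B = es"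
    by auto
  have Bc: "B \<in> carrier_mat n n" using s(1) A unfolding similar_mat_wit_def Let_def by auto
  have "eigenvalue A (B$$(i,i))" if i: "i < n" for i
  proof -
    have "B$$(i,i) = es ! i" unfolding s(3)[symmetric] diag_mat_def using i Bc by simp
    hence "B$$(i,i) \<in> set es" using i es(2) by auto
    hence "poly (char_poly A) (B$$(i,i)) = 0" unfolding es(1)
      by (induction es) (auto)
    thus ?thesis using eigenvalue_root_char_poly[OF A] by auto
  qed
  thus ?thesis using s Bc by blast
qed

lemma lyap:
  fixes M :: "real^'n^'n"
  assumes hM: "hurwitz M"
  shows "\<exists>P a m. a > 0 \<and> m > 0 \<and> (\<forall>x. m * (norm x)^2 \<le> x \<bullet> (P *v x))
    \<and> (\<forall>x z. (P *v x) \<bullet> z = (P *v z) \<bullet> x) \<and> (\<forall>x. (P *v x) \<bullet> (M *v x) \<le> - a * (x \<bullet> (P *v x)))"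
proof -
  define n where "n = CARD('n)"
  have n0: "n > 0" unfolding n_def by simp
  obtain h where h0: "bij_betw h {0..<n} (UNIV::'n set)"
    using ex_bij_betw_nat_finite[of "UNIV::'n set"] unfolding n_def by auto
  have h: "bij_betw h {..<n} (UNIV::'n set)" using h0 by (simp add: atLeast0LessThan)
  define hi where "hi = inv_into {..<n} h"
  have hih[simp]: "k < n \<Longrightarrow> hi (h k) = k" for k
    unfolding hi_def using h by (simp add: bij_betw_def inv_into_f_f)
  have hhi[simp]: "h (hi j) = j" for j
    unfolding hi_def using h by (simp add: bij_betw_def f_inv_into_f)
  have hilt[simp]: "hi j < n" for j
    unfolding hi_def using h by (metis bij_betw_def inv_into_into lessThan_iff UNIV_I)
  have reidx: "(\<Sum>j\<in>UNIV. f j) = (\<Sum>k<n. f (h k))" for f :: "'n \<Rightarrow> 'b::comm_monoid_add"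
    using sum.reindex_bij_betw[OF h, of f] by simp
  define A where "A = Matrix.mat n n (\<lambda>(i,j). complex_of_real (M $ h i $ h j))"
  have Ac: "A \<in> carrier_mat n n" unfolding A_def by simp
  have Aij: "i < n \<Longrightarrow> j < n \<Longrightarrow> A$$(i,j) = complex_of_real (M $ h i $ h j)" for i j
    unfolding A_def by simp
  obtain B P0 Q where sw: "similar_mat_wit A B P0 Q" and ut: "upper_triangular B"
    and Bc: "B \<in> carrier_mat n n" and ev: "\<forall>i<n. eigenvalue A (B$$(i,i))"
    using schur_ex[OF Ac] by blast
  have Pc: "P0 \<in> carrier_mat n n" and Qc: "Q \<in> carrier_mat n n" and PQ: "P0 * Q = 1\<^sub>m n"
    and QP: "Q * P0 = 1\<^sub>m n" and APBQ: "A = P0 * B * Q"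
    using sw Ac unfolding similar_mat_wit_def Let_def by auto
  have QAB: "Q * A = B * Q"
  proof -
    have "Q * A = Q * (P0 * (B * Q))" using APBQ Pc Bc Qc by (simp add: assoc_mult_mat[of _ n n _ n _ n])
    also have "\<dots> = (Q * P0) * (B * Q)" using Pc Bc Qc by (simp add: assoc_mult_mat[of _ n n _ n _ n])
    also have "\<dots> = B * Q" using QP Bc Qc by simp
    finally show ?thesis .
  qed
  have QA: "(\<Sum>l<n. Q$$(i,l)*A$$(l,m)) = (\<Sum>l<n. B$$(i,l)*Q$$(l,m))" if "i<n" "m<n" for i m
    using mult_entry[OF Qc Ac that] mult_entry[OF Bc Qc that] QAB by simp
  have PQe: "(\<Sum>l<n. P0$$(k,l)*Q$$(l,m)) = (if k = m then 1 else 0)" if "k<n" "m<n" for k m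
    using mult_entry[OF Pc Qc that] PQ that by simp
  have Bup: "l < i \<Longrightarrow> i < n \<Longrightarrow> B$$(i,l) = 0" for i l
    using ut Bc unfolding upper_triangular_def by auto
  have Bneg: "Re (B$$(i,i)) < 0" if i: "i < n" for i
  proof -
    from ev i obtain v where v: "v \<in> carrier_vec n" "v \<noteq> 0\<^sub>v n" "A *\<^sub>v v = B$$(i,i) \<cdot>\<^sub>v v"
      unfolding eigenvalue_def eigenvector_def using Ac by auto
    define w :: "complex^'n" where "w = (\<chi> j. vec_index v (hi j))"
    have "w \<noteq> 0"
    proof
      assume w0: "w = 0"
      have "v = 0\<^sub>v n"
      proof (rule eq_vecI)
        fix k assume k: "k < dim_vec (0\<^sub>v n :: complex Matrix.vec)"
        hence "k < n" by simp
        have "vec_index v k = w $ (h k)" unfolding w_def using \<open>k<n\<close> by simp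
        thus "vec_index v k = vec_index (0\<^sub>v n) k" using w0 \<open>k<n\<close> by simp
      qed (use v in auto)
      thus False using v by simp
    qed
    moreover have "\<forall>j. (cmat M *v w) $ j = (B$$(i,i) *s w) $ j"
    proof
      fix j
      have "(cmat M *v w) $ j = (\<Sum>k<n. complex_of_real (M $ j $ h k) * vec_index v k)"
        unfolding matrix_vector_mult_def cmat_def w_def by (simp add: reidx)
      also have "\<dots> = vec_index (A *\<^sub>v v) (hi j)"
        using v(1) Ac by (simp add: scalar_prod_def Aij lessThan_atLeast0)
      also have "\<dots> = B$$(i,i) * w $ j" using v unfolding w_def by simp
      finally show "(cmat M *v w) $ j = (B$$(i,i) *s w) $ j" by simp
    qed
    hence "cmat M *v w = B$$(i,i) *s w" by (simp add: Finite_Cartesian_Product.vec_eq_iff)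
    ultimately show ?thesis using hM unfolding hurwitz_def by blast
  qed
  define a0 where "a0 = Min ((\<lambda>i. - Re (B$$(i,i))) ` {..<n})"
  have a0pos: "a0 > 0" unfolding a0_def using n0 Bneg by (subst Min_gr_iff) auto
  have a0le: "Re (B$$(i,i)) \<le> - a0" if "i < n" for i
  proof -
    have "a0 \<le> - Re (B$$(i,i))" unfolding a0_def using that by (intro Min_le) auto
    thus ?thesis by simp
  qed
  define Kb where "Kb = (\<Sum>i<n. \<Sum>l<n. cmod (B$$(i,l)))"
  have Kb0: "Kb \<ge> 0" unfolding Kb_def by (intro sum_nonneg) auto
  define e where "e = min 1 (a0 / (2*(Kb+1)))"
  have e0: "e > 0" and e1: "e \<le> 1" using a0pos Kb0 by (auto simp: e_def)
  have eKb: "e * Kb \<le> a0/2"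
  proof -
    have "e * Kb \<le> a0/(2*(Kb+1)) * Kb" using Kb0 by (intro mult_right_mono) (auto simp: e_def)
    also have "\<dots> = a0/2 * (Kb/(Kb+1))" using Kb0 by (simp add: field_simps)
    also have "\<dots> \<le> a0/2 * 1" using Kb0 a0pos by (intro mult_left_mono) auto
    finally show ?thesis by simp
  qed
  define y where "y x i = (\<Sum>l<n. Q$$(i,l) * complex_of_real (x $ h l)) / complex_of_real (e^i)"
    for x :: "real^'n" and i
  define P :: "real^'n^'n" where
    "P = (\<chi> j k. Re (\<Sum>i<n. cnj (Q$$(i,hi j)) * Q$$(i,hi k) / complex_of_real ((e^i)^2)))"
  have ey: "complex_of_real e ^ l * y x l = (\<Sum>m<n. Q$$(l,m) * of_real (x $ h m))" for x l
    unfolding y_def using e0 by simp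
  have form: "(P *v x) \<bullet> z = Re (\<Sum>i<n. y x i * cnj (y z i))" for x z
  proof -
    define r where "r i l m = Re (cnj (Q$$(i,m)) * Q$$(i,l) / complex_of_real ((e^i)^2)) * (x $ h l) * (z $ h m)" for i l m
    have L: "(P *v x) \<bullet> z = (\<Sum>m<n. \<Sum>l<n. \<Sum>i<n. r i l m)"
      unfolding inner_vec_def matrix_vector_mult_def P_def r_def
      by (simp add: reidx sum_distrib_left sum_distrib_right Re_sum mult.assoc mult.commute)
    have R: "Re (\<Sum>i<n. y x i * cnj (y z i)) = (\<Sum>i<n. \<Sum>m<n. \<Sum>l<n. r i l m)"
      unfolding y_def r_def
      by (simp add: Re_sum sum_distrib_left sum_distrib_right cnj_sum power2_eq_square Re_divide_of_real
          mult.assoc mult.commute mult.left_commute sum_divide_distrib distrib_left sum.distrib add_divide_distrib)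
    have "(\<Sum>m<n. \<Sum>l<n. \<Sum>i<n. r i l m) = (\<Sum>m<n. \<Sum>i<n. \<Sum>l<n. r i l m)"
      by (intro sum.cong refl sum.swap)
    also have "\<dots> = (\<Sum>i<n. \<Sum>m<n. \<Sum>l<n. r i l m)" by (rule sum.swap)
    finally show ?thesis using L R by simp
  qed
  have normsq: "x \<bullet> (P *v x) = (\<Sum>i<n. (cmod (y x i))^2)" for x
  proof -
    have "x \<bullet> (P *v x) = Re (\<Sum>i<n. y x i * cnj (y x i))" using form[of x x] by (simp add: inner_commute)
    also have "\<dots> = (\<Sum>i<n. (cmod (y x i))^2)" by (simp add: Re_sum complex_mult_cnj cmod_def)
    finally show ?thesis .
  qed
  have symm: "(P *v x) \<bullet> z = (P *v z) \<bullet> x" for x z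
    unfolding form Re_sum by (intro sum.cong) (auto simp: algebra_simps)
  have E1: "y (M *v x) i = (\<Sum>l<n. B$$(i,l) * complex_of_real (e^l / e^i) * y x l)" if i: "i < n" for x i
  proof -
    have "(\<Sum>l<n. Q$$(i,l) * of_real ((M *v x) $ h l)) = (\<Sum>l<n. Q$$(i,l) * (\<Sum>m<n. A$$(l,m) * of_real (x $ h m)))"
      by (intro sum.cong refl) (simp add: matrix_vector_mult_def reidx Aij)
    also have "\<dots> = (\<Sum>l<n. \<Sum>m<n. Q$$(i,l) * A$$(l,m) * of_real (x $ h m))"
      by (simp add: sum_distrib_left mult.assoc)
    also have "\<dots> = (\<Sum>m<n. \<Sum>l<n. Q$$(i,l) * A$$(l,m) * of_real (x $ h m))"
      by (rule sum.swap)
    also have "\<dots> = (\<Sum>m<n. (\<Sum>l<n. Q$$(i,l) * A$$(l,m)) * of_real (x $ h m))"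
      by (simp add: sum_distrib_right)
    also have "\<dots> = (\<Sum>m<n. (\<Sum>l<n. B$$(i,l) * Q$$(l,m)) * of_real (x $ h m))"
      using QA i by simp
    also have "\<dots> = (\<Sum>m<n. \<Sum>l<n. B$$(i,l) * Q$$(l,m) * of_real (x $ h m))"
      by (simp add: sum_distrib_right)
    also have "\<dots> = (\<Sum>l<n. \<Sum>m<n. B$$(i,l) * Q$$(l,m) * of_real (x $ h m))"
      by (rule sum.swap)
    also have "\<dots> = (\<Sum>l<n. B$$(i,l) * (complex_of_real (e^l) * y x l))"
      by (simp add: ey sum_distrib_left mult.assoc)
    finally have *: "(\<Sum>l<n. Q$$(i,l) * of_real ((M *v x) $ h l)) = (\<Sum>l<n. B$$(i,l) * (complex_of_real (e^l) * y x l))" .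
    have "y (M *v x) i = (\<Sum>l<n. B$$(i,l) * (complex_of_real (e^l) * y x l)) / complex_of_real (e^i)"
      unfolding y_def[of "M *v x"] * ..
    also have "\<dots> = (\<Sum>l<n. B$$(i,l) * complex_of_real (e^l / e^i) * y x l)"
      by (simp add: sum_divide_distrib mult.assoc)
    finally show ?thesis .
  qed
  have E2: "complex_of_real (x $ h k) = (\<Sum>l<n. P0$$(k,l) * complex_of_real (e^l) * y x l)" if k: "k < n" for x k
  proof -
    have "(\<Sum>l<n. P0$$(k,l) * complex_of_real (e^l) * y x l) = (\<Sum>l<n. \<Sum>m<n. P0$$(k,l) * Q$$(l,m) * of_real (x $ h m))"
      by (simp add: mult.assoc ey sum_distrib_left)
    also have "\<dots> = (\<Sum>m<n. \<Sum>l<n. P0$$(k,l) * Q$$(l,m) * of_real (x $ h m))"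
      by (rule sum.swap)
    also have "\<dots> = (\<Sum>m<n. (\<Sum>l<n. P0$$(k,l) * Q$$(l,m)) * of_real (x $ h m))"
      by (simp add: sum_distrib_right)
    also have "\<dots> = (\<Sum>m<n. (if k = m then 1 else 0) * of_real (x $ h m))"
      using PQe k by simp
    also have "\<dots> = (\<Sum>m<n. if m = k then of_real (x $ h m) else 0)"
      by (intro sum.cong refl) auto
    also have "\<dots> = of_real (x $ h k)" using k by (simp add: sum.delta)
    finally show ?thesis by simp
  qed
  have yS: "(cmod (y x i))^2 \<le> (\<Sum>i<n. (cmod (y x i))^2)" if "i < n" for x i
    using that by (intro member_le_sum) auto
  have key: "Re (\<Sum>i<n. y x i * cnj (y (M *v x) i)) \<le> - (a0/2) * (\<Sum>i<n. (cmod (y x i))^2)" for x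
  proof -
    define S where "S = (\<Sum>i<n. (cmod (y x i))^2)"
    have S0: "S \<ge> 0" unfolding S_def by (intro sum_nonneg) auto
    have yy: "cmod (y x i) * cmod (y x l) \<le> S" if "i<n" "l<n" for i l
    proof -
      have "0 \<le> (cmod (y x i) - cmod (y x l))^2" by simp
      hence "2 * (cmod (y x i) * cmod (y x l)) \<le> (cmod (y x i))^2 + (cmod (y x l))^2"
        by (simp add: power2_diff)
      thus ?thesis using yS[OF that(1), of x] yS[OF that(2), of x] unfolding S_def by linarith
    qed
    define f where "f i l = cnj (B$$(i,l)) * complex_of_real (e^l/e^i) * (y x i * cnj (y x l))" for i l
    have row: "y x i * cnj (y (M *v x) i) = (\<Sum>l<n. f i l)" if "i<n" for i
      unfolding E1[OF that] f_def by (simp add: cnj_sum sum_distrib_left mult_ac)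
    have fii: "Re (f i i) \<le> - a0 * (cmod (y x i))^2" if "i<n" for i
    proof -
      have "f i i = cnj (B$$(i,i)) * complex_of_real ((cmod (y x i))^2)"
        unfolding f_def using e0 by (simp add: complex_norm_square[symmetric])
      hence "Re (f i i) = Re (B$$(i,i)) * (cmod (y x i))^2" by simp
      moreover have "Re (B$$(i,i)) * (cmod (y x i))^2 \<le> (- a0) * (cmod (y x i))^2"
        using a0le[OF that] by (intro mult_right_mono) auto
      ultimately show ?thesis by simp
    qed
    have fil: "cmod (f i l) \<le> e * cmod (B$$(i,l)) * S" if "i<n" "l<n" "l \<noteq> i" for i l
    proof (cases "l < i")
      case True then have "B$$(i,l) = 0" using Bup that by auto
      then show ?thesis using S0 e0 by (simp add: f_def)
    next
      case False then have li: "i < l" using that by auto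
      have "e^l/e^i = e^(l-i)" using e0 li by (simp add: power_diff)
      also have "\<dots> \<le> e^1" using e0 e1 li by (intro power_decreasing) auto
      finally have ee: "e^l/e^i \<le> e" by simp
      have "cmod (f i l) = cmod (B$$(i,l)) * (e^l/e^i) * (cmod (y x i) * cmod (y x l))"
        unfolding f_def using e0 by (simp add: norm_mult norm_divide norm_power)
      also have "\<dots> \<le> cmod (B$$(i,l)) * e * S"
        using ee yy[OF that(1,2)] e0 by (intro mult_mono) auto
      finally show ?thesis by (simp add: mult_ac)
    qed
    have rowb: "Re (\<Sum>l<n. f i l) \<le> - a0 * (cmod (y x i))^2 + e * (\<Sum>l<n. cmod (B$$(i,l))) * S"
      if i: "i<n" for i
    proof -
      have "(\<Sum>l<n. f i l) = f i i + (\<Sum>l\<in>{..<n}-{i}. f i l)" using i by (simp add: sum.remove)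
      hence "Re (\<Sum>l<n. f i l) = Re (f i i) + Re (\<Sum>l\<in>{..<n}-{i}. f i l)" by simp
      also have "\<dots> \<le> - a0 * (cmod (y x i))^2 + cmod (\<Sum>l\<in>{..<n}-{i}. f i l)"
        using fii[OF i] complex_Re_le_cmod[of "\<Sum>l\<in>{..<n}-{i}. f i l"] by (intro add_mono) (auto simp del: Re_sum)
      also have "cmod (\<Sum>l\<in>{..<n}-{i}. f i l) \<le> (\<Sum>l\<in>{..<n}-{i}. cmod (f i l))" by (rule norm_sum)
      also have "\<dots> \<le> (\<Sum>l\<in>{..<n}-{i}. e * cmod (B$$(i,l)) * S)" using fil i by (intro sum_mono) auto
      also have "\<dots> \<le> (\<Sum>l<n. e * cmod (B$$(i,l)) * S)" using e0 S0 by (intro sum_mono2) auto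
      also have "\<dots> = e * (\<Sum>l<n. cmod (B$$(i,l))) * S" by (simp add: sum_distrib_left sum_distrib_right mult_ac)
      finally show ?thesis by simp
    qed
    have "Re (\<Sum>i<n. y x i * cnj (y (M *v x) i)) = (\<Sum>i<n. Re (\<Sum>l<n. f i l))"
      unfolding Re_sum by (intro sum.cong refl) (simp add: row)
    also have "\<dots> \<le> (\<Sum>i<n. - a0 * (cmod (y x i))^2 + e * (\<Sum>l<n. cmod (B$$(i,l))) * S)"
      using rowb by (intro sum_mono) auto
    also have "\<dots> = - a0 * (\<Sum>i<n. (cmod (y x i))^2) + e * (\<Sum>i<n. \<Sum>l<n. cmod (B$$(i,l))) * S"
      by (simp add: sum.distrib sum_distrib_left sum_distrib_right mult_ac sum_subtractf sum_negf)
    also have "\<dots> = - a0 * S + e * Kb * S" unfolding S_def Kb_def ..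
    also have "\<dots> \<le> - a0 * S + a0/2 * S" using eKb S0 by (intro add_left_mono mult_right_mono) auto
    also have "\<dots> = - (a0/2) * S" by simp
    finally show ?thesis unfolding S_def .
  qed
  define Kp where "Kp = (\<Sum>k<n. \<Sum>l<n. cmod (P0$$(k,l)))"
  have Kp0: "Kp \<ge> 0" unfolding Kp_def by (intro sum_nonneg) auto
  have lower: "1/(n*Kp^2+1) * (norm x)^2 \<le> x \<bullet> (P *v x)" for x
  proof -
    define S where "S = (\<Sum>i<n. (cmod (y x i))^2)"
    have S0: "S \<ge> 0" unfolding S_def by (intro sum_nonneg) auto
    have ys: "cmod (y x l) \<le> sqrt S" if "l<n" for l
      using yS[OF that, of x] unfolding S_def by (simp add: real_le_rsqrt)
    have xk: "\<bar>x $ h k\<bar> \<le> Kp * sqrt S" if k: "k<n" for k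
    proof -
      have "\<bar>x $ h k\<bar> = cmod (\<Sum>l<n. P0$$(k,l) * complex_of_real (e^l) * y x l)"
        using E2[OF k, of x] by (metis norm_of_real)
      also have "\<dots> \<le> (\<Sum>l<n. cmod (P0$$(k,l) * complex_of_real (e^l) * y x l))" by (rule norm_sum)
      also have "\<dots> \<le> (\<Sum>l<n. cmod (P0$$(k,l)) * sqrt S)"
      proof (intro sum_mono)
        fix l assume "l \<in> {..<n}"
        hence l: "l < n" by simp
        have el: "e^l \<le> 1" using e0 e1 by (intro power_le_one) auto
        have "cmod (P0$$(k,l) * complex_of_real (e^l) * y x l) = cmod (P0$$(k,l)) * (e^l * cmod (y x l))"
          using e0 by (simp add: norm_mult norm_power)
        also have "\<dots> \<le> cmod (P0$$(k,l)) * (1 * sqrt S)"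
          using el ys[OF l] e0 by (intro mult_left_mono mult_mono) auto
        finally show "cmod (P0$$(k,l) * complex_of_real (e^l) * y x l) \<le> cmod (P0$$(k,l)) * sqrt S" by simp
      qed
      also have "\<dots> = (\<Sum>l<n. cmod (P0$$(k,l))) * sqrt S" by (simp add: sum_distrib_right)
      also have "\<dots> \<le> Kp * sqrt S"
      proof (intro mult_right_mono)
        show "(\<Sum>l<n. cmod (P0$$(k,l))) \<le> Kp" unfolding Kp_def using k
          by (intro member_le_sum[where f="\<lambda>k. \<Sum>l<n. cmod (P0$$(k,l))"]) (auto intro: sum_nonneg)
      qed (use S0 in simp)
      finally show ?thesis .
    qed
    have "(norm x)^2 = x \<bullet> x" by (rule power2_norm_eq_inner)
    also have "\<dots> = (\<Sum>k<n. (x $ h k)^2)"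
      by (simp add: inner_vec_def reidx power2_eq_square)
    also have "\<dots> \<le> (\<Sum>k<n. Kp^2 * S)"
    proof (intro sum_mono)
      fix k assume "k \<in> {..<n}"
      hence "(x $ h k)^2 \<le> (Kp * sqrt S)^2"
        using xk by (metis power2_abs power_mono abs_ge_zero lessThan_iff)
      also have "\<dots> = Kp^2 * S" using S0 by (simp add: power_mult_distrib)
      finally show "(x $ h k)^2 \<le> Kp^2 * S" .
    qed
    also have "\<dots> = n * Kp^2 * S" by simp
    finally have nx: "(norm x)^2 \<le> n * Kp^2 * S" .
    have d: "real n * Kp^2 + 1 > 0"
    proof -
      have "0 \<le> real n * Kp^2" by simp
      thus ?thesis by linarith
    qed
    have "(norm x)^2 \<le> (n * Kp^2 + 1) * S" using nx S0 by (simp add: algebra_simps)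
    hence "1/(n*Kp^2+1) * (norm x)^2 \<le> S" using d by (simp add: field_simps)
    thus ?thesis using normsq[of x] unfolding S_def by simp
  qed
  show ?thesis
  proof (intro exI conjI allI)
    show "a0/2 > 0" using a0pos by simp
    show "1/(n*Kp^2+1) > 0"
    proof -
      have "0 \<le> real n * Kp^2" by simp
      hence "0 < real n * Kp^2 + 1" by linarith
      thus ?thesis by simp
    qed
    show "1/(n*Kp^2+1) * (norm x)^2 \<le> x \<bullet> (P *v x)" for x by (rule lower)
    show "(P *v x) \<bullet> z = (P *v z) \<bullet> x" for x z by (rule symm)
    show "(P *v x) \<bullet> (M *v x) \<le> - (a0/2) * (x \<bullet> (P *v x))" for x
      using key[of x] form[of x "M *v x"] normsq[of x] by simp
  qed
qed

lemma right_deriv_nonpos: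
  fixes \<phi> \<phi>' :: "real \<Rightarrow> real"
  assumes st: "s \<le> t" and cont: "continuous_on {s..t} \<phi>"
    and der: "\<And>\<tau>. \<tau> \<in> {s..<t} \<Longrightarrow> (\<phi> has_real_derivative \<phi>' \<tau>) (at \<tau> within {\<tau>..})"
    and neg: "\<And>\<tau>. \<tau> \<in> {s..<t} \<Longrightarrow> \<phi>' \<tau> \<le> 0"
  shows "\<phi> t \<le> \<phi> s"
proof (rule ccontr)
  assume "\<not> \<phi> t \<le> \<phi> s"
  hence gt: "\<phi> t > \<phi> s" by simp
  with st have st': "s < t" by (cases "s = t") auto
  define \<epsilon> where "\<epsilon> = (\<phi> t - \<phi> s) / (2*(t-s))"
  have \<epsilon>0: "\<epsilon> > 0" unfolding \<epsilon>_def using gt st' by simp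
  define \<psi> where "\<psi> \<tau> = \<phi> \<tau> - \<phi> s - \<epsilon>*(\<tau> - s)" for \<tau>
  define S where "S = {s..t} \<inter> \<psi> -` {..0}"
  have cpsi: "continuous_on {s..t} \<psi>" unfolding \<psi>_def by (intro continuous_intros cont)
  have clS: "closed S" unfolding S_def by (rule continuous_closed_preimage[OF cpsi]) auto
  have sS: "s \<in> S" unfolding S_def \<psi>_def using st by auto
  have Ssub: "S \<subseteq> {s..t}" unfolding S_def by auto
  have bdd: "bdd_above S" using Ssub by (meson bdd_above_Icc bdd_above_mono)
  define c where "c = Sup S"
  have cS: "c \<in> S" unfolding c_def using closed_contains_Sup[OF _ bdd clS] sS by auto
  have "\<epsilon>*(t-s) = (\<phi> t - \<phi> s)/2" unfolding \<epsilon>_def using st' by (simp add: field_simps)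
  hence psit: "\<psi> t > 0" unfolding \<psi>_def using gt by simp
  have ct: "c < t" using cS psit Ssub unfolding S_def by (cases "c = t") auto
  have sc: "s \<le> c" using cS Ssub by auto
  have psic: "\<psi> c \<le> 0" using cS unfolding S_def by auto
  have dpsi: "(\<psi> has_real_derivative (\<phi>' c - \<epsilon>)) (at c within {c..})"
    unfolding \<psi>_def using der[of c] sc ct
    by (auto intro!: derivative_eq_intros)
  have "\<phi>' c - \<epsilon> < 0" using neg[of c] sc ct \<epsilon>0 by auto
  from dpsi[unfolded has_field_derivative_iff] this
  have "eventually (\<lambda>y. (\<psi> y - \<psi> c) / (y - c) < 0) (at c within {c..})"
    by (rule order_tendstoD(2))
  then obtain d where d: "d > 0" and dP: "\<And>y. y \<in> {c..} \<Longrightarrow> y \<noteq> c \<Longrightarrow> dist y c < d \<Longrightarrow> (\<psi> y - \<psi> c) / (y - c) < 0"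
    unfolding eventually_at by blast
  define y where "y = c + min (d/2) ((t-c)/2)"
  have m: "min (d/2) ((t-c)/2) \<le> (t-c)/2" "min (d/2) ((t-c)/2) \<le> d/2" "min (d/2) ((t-c)/2) > 0"
    using d ct by (auto simp del: min_less_iff_conj simp add: min_def)
  have yc: "y > c" unfolding y_def using m by simp
  have yt: "y \<le> t" unfolding y_def using m by simp
  have "dist y c < d" unfolding y_def dist_real_def using m d by simp
  hence "(\<psi> y - \<psi> c) / (y - c) < 0" using dP[of y] yc by auto
  hence "\<psi> y < \<psi> c" using yc by (simp add: divide_less_0_iff)
  hence "y \<in> S" unfolding S_def using psic sc yc yt by auto
  hence "y \<le> c" unfolding c_def using bdd by (rule cSup_upper)
  thus False using yc by simp
qed

lemma aux_ineq: "(E::real) > 0 \<Longrightarrow> q \<le> -r*w \<Longrightarrow> E*(2*r)*w + E*(2*q) \<le> 0"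
proof -
  assume E: "E > 0" and q: "q \<le> -r*w"
  have "E*(2*r)*w + E*(2*q) = E*(2*(r*w+q))" by (simp add: algebra_simps)
  also have "\<dots> \<le> 0" using E q by (intro mult_nonneg_nonpos) auto
  finally show ?thesis .
qed

lemma interval_decay:
  fixes x :: "real \<Rightarrow> real^'n" and P A :: "real^'n^'n"
  assumes ab: "a \<le> b" and cx: "continuous_on {a..b} x"
   and dx: "\<And>\<tau>. \<tau> \<in> {a..<b} \<Longrightarrow> (x has_vector_derivative (A *v x \<tau>)) (at \<tau> within {\<tau>..})"
   and sym: "\<And>u z. (P *v u) \<bullet> z = (P *v z) \<bullet> u"
   and dec: "\<And>u. (P *v u) \<bullet> (A *v u) \<le> - r * (u \<bullet> (P *v u))"
  shows "x b \<bullet> (P *v x b) \<le> exp (- (2*r)*(b-a)) * (x a \<bullet> (P *v x a))"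
proof -
  define V where "V \<tau> = x \<tau> \<bullet> (P *v x \<tau>)" for \<tau>
  define \<phi> where "\<phi> \<tau> = exp (2*r*\<tau>) * V \<tau>" for \<tau>
  have dV: "(V has_real_derivative (2 * ((P *v x \<tau>) \<bullet> (A *v x \<tau>)))) (at \<tau> within {\<tau>..})"
    if "\<tau> \<in> {a..<b}" for \<tau>
  proof -
    have xd: "(x has_derivative (\<lambda>h. h *\<^sub>R (A *v x \<tau>))) (at \<tau> within {\<tau>..})"
      using dx[OF that] unfolding has_vector_derivative_def .
    have "(V has_derivative (\<lambda>h. x \<tau> \<bullet> (P *v (h *\<^sub>R (A *v x \<tau>))) + (h *\<^sub>R (A *v x \<tau>)) \<bullet> (P *v x \<tau>))) (at \<tau> within {\<tau>..})"
      unfolding V_def by (rule has_derivative_inner[OF xd bounded_linear.has_derivative[OF matrix_vector_mul_bounded_linear xd]])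
    then show ?thesis unfolding has_field_derivative_def
    proof (rule has_derivative_eq_rhs)
      have "x \<tau> \<bullet> (P *v (A *v x \<tau>)) = (P *v x \<tau>) \<bullet> (A *v x \<tau>)"
        using sym[of "A *v x \<tau>" "x \<tau>"] by (simp add: inner_commute)
      show "(\<lambda>h. x \<tau> \<bullet> (P *v (h *\<^sub>R (A *v x \<tau>))) + (h *\<^sub>R (A *v x \<tau>)) \<bullet> (P *v x \<tau>)) = (*) (2 * ((P *v x \<tau>) \<bullet> (A *v x \<tau>)))"
      proof (rule ext)
        fix h
        have "P *v (h *\<^sub>R (A *v x \<tau>)) = h *\<^sub>R (P *v (A *v x \<tau>))" by (rule matrix_vector_mult_scaleR)
        hence "x \<tau> \<bullet> (P *v (h *\<^sub>R (A *v x \<tau>))) = h * ((P *v x \<tau>) \<bullet> (A *v x \<tau>))"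
          using \<open>x \<tau> \<bullet> (P *v (A *v x \<tau>)) = (P *v x \<tau>) \<bullet> (A *v x \<tau>)\<close> by simp
        moreover have "(h *\<^sub>R (A *v x \<tau>)) \<bullet> (P *v x \<tau>) = h * ((P *v x \<tau>) \<bullet> (A *v x \<tau>))"
          by (simp add: inner_commute[of "A *v x \<tau>"])
        ultimately show "x \<tau> \<bullet> (P *v (h *\<^sub>R (A *v x \<tau>))) + (h *\<^sub>R (A *v x \<tau>)) \<bullet> (P *v x \<tau>) = 2 * ((P *v x \<tau>) \<bullet> (A *v x \<tau>)) * h"
          by simp
      qed
    qed
  qed
  have cV: "continuous_on {a..b} V" unfolding V_def
    by (rule continuous_on_inner[OF cx bounded_linear.continuous_on[OF matrix_vector_mul_bounded_linear cx]])
  define \<phi>' where "\<phi>' \<tau> = exp (2*r*\<tau>) * (2*r) * V \<tau> + exp (2*r*\<tau>) * (2 * ((P *v x \<tau>) \<bullet> (A *v x \<tau>)))" for \<tau>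
  have c1: "continuous_on {a..b} \<phi>" unfolding \<phi>_def by (intro continuous_intros cV)
  have d1: "(\<phi> has_real_derivative \<phi>' \<tau>) (at \<tau> within {\<tau>..})" if t: "\<tau> \<in> {a..<b}" for \<tau>
    unfolding \<phi>_def \<phi>'_def by (auto intro!: derivative_eq_intros dV[OF t])
  have n1: "\<phi>' \<tau> \<le> 0" if t: "\<tau> \<in> {a..<b}" for \<tau>
    unfolding \<phi>'_def by (rule aux_ineq[OF exp_gt_zero dec[of "x \<tau>", folded V_def]])
  have "\<phi> b \<le> \<phi> a" by (rule right_deriv_nonpos[of a b \<phi> \<phi>', OF ab c1 d1 n1])
  hence "exp (2*r*b) * V b \<le> exp (2*r*a) * V a" unfolding \<phi>_def .
  hence h: "V b * exp (2*r*b) \<le> exp (2*r*a) * V a" by (simp add: mult.commute)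
  have "V b \<le> exp (2*r*a) * V a / exp (2*r*b)" using h by (simp add: pos_le_divide_eq)
  moreover have "exp (- (2*r)*(b-a)) = exp (2*r*a) / exp (2*r*b)"
  proof -
    have "exp (- (2*r)*(b-a)) = exp (2*r*a - 2*r*b)" by (rule arg_cong[where f=exp]) (simp add: algebra_simps)
    thus ?thesis by (simp add: exp_diff)
  qed
  ultimately have "V b \<le> exp (- (2*r)*(b-a)) * V a" by simp
  thus ?thesis unfolding V_def by simp
qed

lemma sig_const_gen:
  fixes \<sigma> :: "real \<Rightarrow> nat"
  assumes S: "connected S" and cont: "\<And>u. u \<in> S \<Longrightarrow> isCont \<sigma> u"
    and rc: "(\<sigma> \<longlongrightarrow> \<sigma> a) (at_right a)" and d: "d > 0" "{a<..<a+d} \<subseteq> S" and u: "u \<in> S"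
  shows "\<sigma> u = \<sigma> a"
proof -
  define f where "f u = real (\<sigma> u)" for u
  have loc: "eventually (\<lambda>y. \<sigma> y = \<sigma> v) (at v)" if "v \<in> S" for v
    using topological_tendstoD[OF cont[OF that, unfolded isCont_def] open_discrete[of "{\<sigma> v}"]] by simp
  have "continuous_on S f"
  proof (intro continuous_at_imp_continuous_on ballI)
    fix v assume v: "v \<in> S"
    have "eventually (\<lambda>y. f y = f v) (at v)" using loc[OF v] by (auto elim: eventually_mono simp: f_def)
    hence "(f \<longlongrightarrow> f v) (at v)" by (rule tendsto_eventually)
    thus "isCont f v" unfolding isCont_def .
  qed
  moreover have "\<exists>e>0. \<forall>y. y \<in> S \<and> f y \<noteq> f v \<longrightarrow> e \<le> norm (f y - f v)" if "v \<in> S" for v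
  proof (intro exI[of _ 1] conjI allI impI)
    fix y assume "y \<in> S \<and> f y \<noteq> f v"
    hence ne: "\<sigma> y \<noteq> \<sigma> v" by (auto simp: f_def)
    show "1 \<le> norm (f y - f v)"
    proof (cases "\<sigma> y < \<sigma> v")
      case True thus ?thesis by (simp add: f_def)
    next
      case False thus ?thesis using ne by (simp add: f_def)
    qed
  qed simp
  ultimately have "f constant_on S" by (rule continuous_discrete_range_constant[OF S])
  then obtain c where c: "\<forall>y\<in>S. f y = c" unfolding constant_on_def by blast
  have "eventually (\<lambda>y. \<sigma> y = \<sigma> a) (at_right a)"
    using topological_tendstoD[OF rc open_discrete[of "{\<sigma> a}"]] by simp
  then obtain b where b: "b > a" "\<forall>y>a. y < b \<longrightarrow> \<sigma> y = \<sigma> a" unfolding eventually_at_right_field by blast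
  obtain q where q: "0 < q" "q \<le> b - a" "q \<le> d"
    using b d by (intro that[of "min (b-a) d"]) auto
  define y where "y = a + q / 2"
  have y1: "a < y" using q unfolding y_def by simp
  have y2: "y < b" using q unfolding y_def by simp
  have y3: "y < a + d" using q unfolding y_def by simp
  note y = y1 y2 y3
  hence "y \<in> S" using d by auto
  hence "f u = f y" using c u by simp
  thus ?thesis using b y by (simp add: f_def)
qed


lemma chain_ineq:
  fixes v3 w2 v2 v1 v0 E1 E2 E3 L Lk :: real
  assumes "v3 \<le> E1 * w2" "w2 \<le> L * v2" "v2 \<le> E2 * v1" "v1 \<le> Lk * E3 * v0"
    "E1 \<ge> 0" "E2 \<ge> 0" "L \<ge> 0"
  shows "v3 \<le> (L * Lk) * (E1 * E2 * E3) * v0"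
proof -
  have "v3 \<le> E1 * (L * v2)" using assms by (meson mult_left_mono order_trans)
  also have "\<dots> \<le> E1 * (L * (E2 * v1))" using assms by (intro mult_left_mono) auto
  also have "\<dots> \<le> E1 * (L * (E2 * (Lk * E3 * v0)))" using assms by (intro mult_left_mono mult_nonneg_nonneg) auto
  finally show ?thesis by (simp add: mult_ac)
qed

lemma final_ineq:
  fixes m beta L Vt V0 nt n0 r lam t tauD :: real and k :: nat
  assumes m: "m > 0" and L: "L = beta / m" "L \<ge> 1"
    and h1: "m * nt^2 \<le> Vt" and h2: "Vt \<le> L^k * exp (-(2*r)*t) * V0" and h3: "V0 \<le> beta * n0^2"
    and kt: "real k * tauD \<le> t" and tD: "tauD > 0" and rb: "2*r \<ge> 2*lam + ln L / tauD"
    and t: "t \<ge> 0" and nt: "nt \<ge> 0" and n0: "n0 \<ge> 0"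
  shows "nt \<le> sqrt L * exp (- lam * t) * n0"
proof -
  have L0: "L > 0" using L by simp
  have lnL: "ln L \<ge> 0" using L by simp
  have bL: "beta = L * m" using L m by simp
  have kk: "real k \<le> t / tauD" using kt tD by (simp add: pos_le_divide_eq)
  have "L^k = exp (real k * ln L)" using L0 by (simp add: exp_of_nat_mult)
  also have "\<dots> \<le> exp (t / tauD * ln L)"
  proof -
    have "real k * ln L \<le> t / tauD * ln L" using kk lnL by (rule mult_right_mono)
    thus ?thesis by simp
  qed
  finally have e1: "L^k \<le> exp (t / tauD * ln L)" .
  have "(2*lam + ln L / tauD)*t \<le> (2*r)*t" using rb t by (rule mult_right_mono)
  hence "-(2*r)*t \<le> -(2*lam + ln L / tauD)*t" by (simp only: mult_minus_left neg_le_iff_le)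
  hence e2: "exp (-(2*r)*t) \<le> exp (-(2*lam + ln L / tauD)*t)" by (simp only: exp_le_cancel_iff)
  have "L^k * exp (-(2*r)*t) \<le> exp (t / tauD * ln L) * exp (-(2*lam + ln L / tauD)*t)"
    using e1 e2 by (rule mult_mono) auto
  also have "\<dots> = exp (t / tauD * ln L + (-(2*lam + ln L / tauD)*t))" by (rule exp_add[symmetric])
  also have "t / tauD * ln L + (-(2*lam + ln L / tauD)*t) = -(2*lam)*t" by (simp add: algebra_simps)
  finally have ek: "L^k * exp (-(2*r)*t) \<le> exp (-(2*lam)*t)" .
  have "m * nt^2 \<le> L^k * exp (-(2*r)*t) * V0" using h1 h2 by linarith
  also have "\<dots> \<le> L^k * exp (-(2*r)*t) * (beta * n0^2)" using h3 L0 by (intro mult_left_mono) auto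
  also have "\<dots> \<le> exp (-(2*lam)*t) * (beta * n0^2)"
    using ek bL L0 m by (intro mult_right_mono) auto
  also have "\<dots> = m * (L * exp (-(2*lam)*t) * n0^2)" unfolding bL by (simp add: mult_ac)
  finally have "nt^2 \<le> L * exp (-(2*lam)*t) * n0^2" using m by (simp only: mult_le_cancel_left_pos)
  also have "exp (-(2*lam)*t) = (exp (- lam * t))^2"
    by (simp add: power2_eq_square exp_add[symmetric])
  also have "L * (exp (- lam * t))^2 * n0^2 = (sqrt L * exp (- lam * t) * n0)^2"
    using L0 by (simp add: power_mult_distrib)
  finally have sq: "nt^2 \<le> (sqrt L * exp (- lam * t) * n0)^2" .
  have "0 \<le> sqrt L * exp (- lam * t) * n0" using L0 n0 by simp
  thus ?thesis by (rule power2_le_imp_le[OF sq])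
qed

theorem lemma2:
  fixes M :: "nat \<Rightarrow> real^'n^'n" and N :: "real^'n^'n"
    and p :: nat and \<tau>D lam :: real
  assumes "\<forall>i\<in>{1..p}. hurwitz (M i)"
    and "\<tau>D > 0" and "lam > 0"
  shows "\<exists>g0>0. \<forall>g\<ge>g0. \<exists>c>0. \<forall>\<sigma>\<in>dwell_signals p \<tau>D. \<forall>x :: real \<Rightarrow> real^'n.
           (continuous_on {0..} x \<and>
            (\<forall>t\<ge>0. (x has_vector_derivative ((N + g *\<^sub>R M (\<sigma> t)) *v x t)) (at t within {t..})))
           \<longrightarrow> (\<forall>t\<ge>0. norm (x t) \<le> c * exp (- lam * t) * norm (x 0))"
proof -
  note hur = assms(1) and tD = assms(2) and lam = assms(3)
  have ex: "\<forall>i\<in>{1..p}. \<exists>P a m. a > 0 \<and> m > 0 \<and> (\<forall>x. m * (norm x)^2 \<le> x \<bullet> (P *v x))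
    \<and> (\<forall>x z. (P *v x) \<bullet> z = (P *v z) \<bullet> x) \<and> (\<forall>x. (P *v x) \<bullet> (M i *v x) \<le> - a * (x \<bullet> (P *v x)))"
    using lyap hur by blast
  then obtain PP where PP: "\<forall>i\<in>{1..p}. \<exists>a m. a > 0 \<and> m > 0 \<and> (\<forall>x. m * (norm x)^2 \<le> x \<bullet> (PP i *v x))
    \<and> (\<forall>x z. (PP i *v x) \<bullet> z = (PP i *v z) \<bullet> x) \<and> (\<forall>x. (PP i *v x) \<bullet> (M i *v x) \<le> - a * (x \<bullet> (PP i *v x)))"
    using bchoice[OF ex] by blast
  obtain aa where AA: "\<forall>i\<in>{1..p}. \<exists>m. aa i > 0 \<and> m > 0 \<and> (\<forall>x. m * (norm x)^2 \<le> x \<bullet> (PP i *v x))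
    \<and> (\<forall>x z. (PP i *v x) \<bullet> z = (PP i *v z) \<bullet> x) \<and> (\<forall>x. (PP i *v x) \<bullet> (M i *v x) \<le> - aa i * (x \<bullet> (PP i *v x)))"
    using bchoice[OF PP] by blast
  obtain mm where prp: "\<forall>i\<in>{1..p}. aa i > 0 \<and> mm i > 0 \<and> (\<forall>x. mm i * (norm x)^2 \<le> x \<bullet> (PP i *v x))
    \<and> (\<forall>x z. (PP i *v x) \<bullet> z = (PP i *v z) \<bullet> x) \<and> (\<forall>x. (PP i *v x) \<bullet> (M i *v x) \<le> - aa i * (x \<bullet> (PP i *v x)))"
    using bchoice[OF AA] by blast
  define V where "V i u = u \<bullet> (PP i *v u)" for i u
  have aapos: "i \<in> {1..p} \<Longrightarrow> aa i > 0" for i using prp by blast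
  have mmpos: "i \<in> {1..p} \<Longrightarrow> mm i > 0" for i using prp by blast
  have Vlow0: "i \<in> {1..p} \<Longrightarrow> mm i * (norm u)^2 \<le> V i u" for i u using prp unfolding V_def by blast
  have Vsym: "i \<in> {1..p} \<Longrightarrow> (PP i *v u) \<bullet> z = (PP i *v z) \<bullet> u" for i u z using prp by blast
  have Vdec: "i \<in> {1..p} \<Longrightarrow> (PP i *v u) \<bullet> (M i *v u) \<le> - aa i * V i u" for i u using prp unfolding V_def by blast
  define a where "a = Min (insert 1 (aa ` {1..p}))"
  have a0: "a > 0" unfolding a_def using aapos by (subst Min_gr_iff) auto
  have ale: "i \<in> {1..p} \<Longrightarrow> a \<le> aa i" for i unfolding a_def by (intro Min_le) auto
  define m where "m = Min (insert 1 (mm ` {1..p}))"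
  have m0: "m > 0" unfolding m_def using mmpos by (subst Min_gr_iff) auto
  have mle: "i \<in> {1..p} \<Longrightarrow> m \<le> mm i" for i unfolding m_def by (intro Min_le) auto
  have Vlow: "i \<in> {1..p} \<Longrightarrow> m * (norm u)^2 \<le> V i u" for i u
    using Vlow0[of i u] mle[of i] by (meson mult_right_mono order_trans zero_le_power2)
  have Vnn: "i \<in> {1..p} \<Longrightarrow> 0 \<le> V i u" for i u
    using Vlow[of i u] m0 by (meson mult_nonneg_nonneg less_imp_le order_trans zero_le_power2)
  define KP where "KP = Max (insert 0 ((\<lambda>i. onorm ((*v) (PP i))) ` {1..p}))"
  have KP0: "KP \<ge> 0" unfolding KP_def by (intro Max_ge) auto
  have KPb: "norm (PP i *v u) \<le> KP * norm u" if i: "i \<in> {1..p}" for i u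
  proof -
    have "norm (PP i *v u) \<le> onorm ((*v) (PP i)) * norm u" by (rule onorm[OF matrix_vector_mul_bounded_linear])
    also have "\<dots> \<le> KP * norm u" unfolding KP_def using i by (intro mult_right_mono Max_ge) auto
    finally show ?thesis .
  qed
  define KN where "KN = onorm ((*v) N)"
  have KN0: "KN \<ge> 0" unfolding KN_def by (rule onorm_pos_le[OF matrix_vector_mul_bounded_linear])
  have KNb: "norm (N *v u) \<le> KN * norm u" for u unfolding KN_def by (rule onorm[OF matrix_vector_mul_bounded_linear])
  define \<beta> where "\<beta> = KP + m"
  have Vup: "V i u \<le> \<beta> * (norm u)^2" if i: "i \<in> {1..p}" for i u
  proof -
    have "V i u \<le> norm u * norm (PP i *v u)" unfolding V_def by (rule norm_cauchy_schwarz)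
    also have "\<dots> \<le> norm u * (KP * norm u)" by (intro mult_left_mono KPb[OF i]) auto
    also have "\<dots> = KP * (norm u)^2" by (simp add: power2_eq_square)
    also have "\<dots> \<le> \<beta> * (norm u)^2" unfolding \<beta>_def using m0 by (intro mult_right_mono) auto
    finally show ?thesis .
  qed
  define L where "L = \<beta> / m"
  have L1: "L \<ge> 1" unfolding L_def \<beta>_def using m0 KP0 by simp
  have L0: "L > 0" using L1 by simp
  have jump: "V j u \<le> L * V i u" if "i \<in> {1..p}" "j \<in> {1..p}" for i j u
  proof -
    have "V j u \<le> \<beta> * (norm u)^2" by (rule Vup[OF that(2)])
    also have "\<dots> = L * (m * (norm u)^2)" unfolding L_def using m0 by simp
    also have "\<dots> \<le> L * V i u" using Vlow[OF that(1)] L0 by (intro mult_left_mono) auto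
    finally show ?thesis .
  qed
  define g0 where "g0 = (lam + ln L / (2*\<tau>D) + KP*KN/m) / a + 1"
  have num0: "0 \<le> lam + ln L / (2*\<tau>D) + KP*KN/m" using lam L1 tD KP0 KN0 m0 by simp
  have g0pos: "g0 > 0" unfolding g0_def using num0 a0 by (simp add: add_nonneg_pos)
  show ?thesis
  proof (rule exI[of _ g0], intro conjI allI impI)
    show "g0 > 0" by (rule g0pos)
    fix g assume gg: "g \<ge> g0"
    have g0': "g \<ge> 0" using gg g0pos by simp
    define r where "r = g * a - KP*KN/m"
    have "g * a \<ge> g0 * a" using gg a0 by (intro mult_right_mono) auto
    also have "g0 * a = lam + ln L / (2*\<tau>D) + KP*KN/m + a" unfolding g0_def using a0 by (simp add: field_simps)
    finally have "r \<ge> lam + ln L / (2*\<tau>D) + a" unfolding r_def by simp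
    hence rb: "2*r \<ge> 2*lam + ln L / \<tau>D" using a0 by simp
    have dec: "(PP i *v u) \<bullet> ((N + g *\<^sub>R M i) *v u) \<le> - r * V i u" if i: "i \<in> {1..p}" for i u
    proof -
      have e: "(PP i *v u) \<bullet> ((N + g *\<^sub>R M i) *v u) = (PP i *v u) \<bullet> (N *v u) + g * ((PP i *v u) \<bullet> (M i *v u))"
        by (simp add: matrix_vector_mult_add_rdistrib scaleR_matrix_vector_assoc[symmetric] inner_add_right)
      have "(PP i *v u) \<bullet> (N *v u) \<le> norm (PP i *v u) * norm (N *v u)" by (rule norm_cauchy_schwarz)
      also have "\<dots> \<le> (KP * norm u) * (KN * norm u)" using KPb[OF i] KNb KP0 by (intro mult_mono) auto
      also have "\<dots> = KP*KN/m * (m * (norm u)^2)" using m0 by (simp add: power2_eq_square)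
      also have "\<dots> \<le> KP*KN/m * V i u" using Vlow[OF i] KP0 KN0 m0 by (intro mult_left_mono) auto
      finally have t1: "(PP i *v u) \<bullet> (N *v u) \<le> KP*KN/m * V i u" .
      have "g * ((PP i *v u) \<bullet> (M i *v u)) \<le> g * (- aa i * V i u)" using Vdec[OF i] g0' by (intro mult_left_mono) auto
      also have "\<dots> \<le> g * (- a * V i u)" using ale[OF i] Vnn[OF i] g0' by (intro mult_left_mono) (auto intro: mult_right_mono)
      finally have t2: "g * ((PP i *v u) \<bullet> (M i *v u)) \<le> - (g * a) * V i u" by simp
      show ?thesis unfolding e r_def using t1 t2 by (simp add: algebra_simps)
    qed
    show "\<exists>c>0. \<forall>\<sigma>\<in>dwell_signals p \<tau>D. \<forall>x :: real \<Rightarrow> real^'n.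
           (continuous_on {0..} x \<and>
            (\<forall>t\<ge>0. (x has_vector_derivative ((N + g *\<^sub>R M (\<sigma> t)) *v x t)) (at t within {t..})))
           \<longrightarrow> (\<forall>t\<ge>0. norm (x t) \<le> c * exp (- lam * t) * norm (x 0))"
    proof (rule exI[of _ "sqrt L"], intro conjI ballI allI impI)
      show "sqrt L > 0" using L0 by simp
      fix \<sigma> x and t :: real
      assume \<sigma>: "\<sigma> \<in> dwell_signals p \<tau>D"
        and xh: "continuous_on {0..} x \<and> (\<forall>t\<ge>0. (x has_vector_derivative ((N + g *\<^sub>R M (\<sigma> t)) *v x t)) (at t within {t..}))"
        and t0: "t \<ge> 0"
      define Sw where "Sw = switch_times \<sigma>"
      have rng: "u \<ge> 0 \<Longrightarrow> \<sigma> u \<in> {1..p}" for u using \<sigma> unfolding dwell_signals_def by blast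
      have rc: "u \<ge> 0 \<Longrightarrow> (\<sigma> \<longlongrightarrow> \<sigma> u) (at_right u)" for u using \<sigma> unfolding dwell_signals_def by blast
      have fin: "finite (Sw \<inter> {..T})" for T using \<sigma> unfolding dwell_signals_def Sw_def by blast
      have dw: "s \<in> insert 0 Sw \<Longrightarrow> s' \<in> insert 0 Sw \<Longrightarrow> s' < s \<Longrightarrow> \<tau>D \<le> s - s'" for s s'
        using \<sigma> unfolding dwell_signals_def Sw_def by blast
      have Swpos: "u \<in> Sw \<Longrightarrow> u > 0" for u unfolding Sw_def switch_times_def by simp
      have ctn: "u > 0 \<Longrightarrow> u \<notin> Sw \<Longrightarrow> isCont \<sigma> u" for u unfolding Sw_def switch_times_def by simp
      have cx: "continuous_on {0..} x" and dx: "\<And>t. t \<ge> 0 \<Longrightarrow> (x has_vector_derivative ((N + g *\<^sub>R M (\<sigma> t)) *v x t)) (at t within {t..})"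
        using xh by auto
      have seg: "V (\<sigma> a') (x b') \<le> exp (-(2*r)*(b'-a')) * V (\<sigma> a') (x a')"
        if ab: "0 \<le> a'" "a' \<le> b'" and cst: "\<And>u. a' \<le> u \<Longrightarrow> u < b' \<Longrightarrow> \<sigma> u = \<sigma> a'" for a' b'
      proof -
        have i: "\<sigma> a' \<in> {1..p}" using rng ab by simp
        show ?thesis unfolding V_def
        proof (rule interval_decay[OF ab(2)])
          show "continuous_on {a'..b'} x" by (rule continuous_on_subset[OF cx]) (use ab in auto)
          fix \<tau> assume "\<tau> \<in> {a'..<b'}"
          thus "(x has_vector_derivative ((N + g *\<^sub>R M (\<sigma> a')) *v x \<tau>)) (at \<tau> within {\<tau>..})"
            using dx[of \<tau>] cst[of \<tau>] ab by simp
        next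
          show "(PP (\<sigma> a') *v u) \<bullet> z = (PP (\<sigma> a') *v z) \<bullet> u" for u z by (rule Vsym[OF i])
          show "(PP (\<sigma> a') *v u) \<bullet> ((N + g *\<^sub>R M (\<sigma> a')) *v u) \<le> - r * (u \<bullet> (PP (\<sigma> a') *v u))" for u
            using dec[OF i, of u] unfolding V_def .
        qed
      qed
      have cst_open: "\<sigma> u = \<sigma> a'" if "0 \<le> a'" "a' \<le> u" "u < b'" "\<And>v. a' < v \<Longrightarrow> v < b' \<Longrightarrow> v \<notin> Sw" for a' b' u
      proof (cases "u = a'")
        case False
        show ?thesis
        proof (rule sig_const_gen[of "{a'<..<b'}"])
          show "connected {a'<..<b'}" by simp
          show "isCont \<sigma> v" if "v \<in> {a'<..<b'}" for v using that ctn \<open>0 \<le> a'\<close> \<open>\<And>v. a' < v \<Longrightarrow> v < b' \<Longrightarrow> v \<notin> Sw\<close> by auto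
          show "(\<sigma> \<longlongrightarrow> \<sigma> a') (at_right a')" using rc \<open>0 \<le> a'\<close> by simp
          show "b' - a' > 0" using that by simp
          show "{a'<..<a' + (b' - a')} \<subseteq> {a'<..<b'}" by simp
          show "u \<in> {a'<..<b'}" using that False by simp
        qed
      qed simp
      have cst_closed: "\<sigma> u = \<sigma> a'" if "0 \<le> a'" "a' \<le> u" "u \<le> b'" "\<And>v. a' < v \<Longrightarrow> v \<le> b' \<Longrightarrow> v \<notin> Sw" for a' b' u
      proof (cases "u = a'")
        case False
        show ?thesis
        proof (rule sig_const_gen[of "{a'<..b'}"])
          show "connected {a'<..b'}" by simp
          show "isCont \<sigma> v" if "v \<in> {a'<..b'}" for v using that ctn \<open>0 \<le> a'\<close> \<open>\<And>v. a' < v \<Longrightarrow> v \<le> b' \<Longrightarrow> v \<notin> Sw\<close> by auto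
          show "(\<sigma> \<longlongrightarrow> \<sigma> a') (at_right a')" using rc \<open>0 \<le> a'\<close> by simp
          show "b' - a' > 0" using that False by simp
          show "{a'<..<a' + (b' - a')} \<subseteq> {a'<..b'}" by auto
          show "u \<in> {a'<..b'}" using that False by simp
        qed
      qed simp
      have main: "\<forall>T. 0 \<le> T \<longrightarrow> card (Sw \<inter> {..T}) = k \<longrightarrow>
          V (\<sigma> T) (x T) \<le> L^k * exp (-(2*r)*T) * V (\<sigma> 0) (x 0) \<and> real k * \<tau>D \<le> T" for k
      proof (induction k)
        case 0
        show ?case
        proof (intro allI impI)
          fix T :: real assume T: "0 \<le> T" and c: "card (Sw \<inter> {..T}) = 0"
          have e: "Sw \<inter> {..T} = {}" using c fin[of T] by simp
          have ns: "v \<notin> Sw" if "0 < v" "v \<le> T" for v using e that by auto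
          have cs: "\<sigma> u = \<sigma> 0" if "0 \<le> u" "u \<le> T" for u
            by (rule cst_closed[of 0 u T]) (use that ns in auto)
          have "V (\<sigma> 0) (x T) \<le> exp (-(2*r)*(T-0)) * V (\<sigma> 0) (x 0)"
          proof (rule seg)
            show "(0::real) \<le> 0" by simp
            show "0 \<le> T" by (rule T)
            fix u assume "0 \<le> u" "u < T"
            thus "\<sigma> u = \<sigma> 0" by (intro cs) auto
          qed
          thus "V (\<sigma> T) (x T) \<le> L^0 * exp (-(2*r)*T) * V (\<sigma> 0) (x 0) \<and> real 0 * \<tau>D \<le> T"
            using cs[of T] T by simp
        qed
      next
        case (Suc k)
        show ?case
        proof (intro allI impI)
          fix T :: real assume T: "0 \<le> T" and c: "card (Sw \<inter> {..T}) = Suc k"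
          define F where "F = Sw \<inter> {..T}"
          have Ff: "finite F" unfolding F_def by (rule fin)
          have Fne: "F \<noteq> {}" using c unfolding F_def by auto
          define s where "s = Max F"
          have sF: "s \<in> F" unfolding s_def using Ff Fne by (rule Max_in)
          have sSw: "s \<in> Sw" and sT: "s \<le> T" using sF unfolding F_def by auto
          have s0: "s > 0" using Swpos[OF sSw] .
          have Fle: "v \<in> F \<Longrightarrow> v \<le> s" for v unfolding s_def using Ff by (rule Max_ge)
          define F' where "F' = F - {s}"
          have cF': "card F' = k" unfolding F'_def using c sF Ff unfolding F_def by (simp add: card_Diff_singleton)
          have F'f: "finite F'" unfolding F'_def using Ff by simp
          define s' where "s' = (if F' = {} then 0 else Max F')"
          have s'props: "0 \<le> s' \<and> s' < s \<and> s' \<in> insert 0 Sw \<and> Sw \<inter> {..s'} = F'"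
          proof (cases "F' = {}")
            case True
            have "Sw \<inter> {..0} = {}" using Swpos by force
            thus ?thesis using True s0 unfolding s'_def by simp
          next
            case False
            have s'F': "s' \<in> F'" unfolding s'_def using False F'f by (simp add: Max_in)
            have F'le: "v \<in> F' \<Longrightarrow> v \<le> s'" for v unfolding s'_def using False F'f by (simp add: Max_ge)
            have s'F: "s' \<in> F" and s'ne: "s' \<noteq> s" using s'F' unfolding F'_def by auto
            have lt: "s' < s" using Fle[OF s'F] s'ne by simp
            have pos: "0 \<le> s'" using s'F Swpos unfolding F_def by force
            have "Sw \<inter> {..s'} = F'"
            proof
              show "Sw \<inter> {..s'} \<subseteq> F'" using lt sT unfolding F'_def F_def by auto
              show "F' \<subseteq> Sw \<inter> {..s'}" using F'le unfolding F'_def F_def by auto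
            qed
            thus ?thesis using pos lt s'F unfolding F_def by auto
          qed
          then have s'0: "0 \<le> s'" and s's: "s' < s" and s'Sw: "s' \<in> insert 0 Sw" and cs': "Sw \<inter> {..s'} = F'"
            by auto
          from Suc.IH s'0 cs' cF' have IH: "V (\<sigma> s') (x s') \<le> L^k * exp (-(2*r) * s') * V (\<sigma> 0) (x 0)" "real k * \<tau>D \<le> s'"
            by auto
          have nsw1: "v \<notin> Sw" if "s' < v" "v < s" for v
          proof
            assume v: "v \<in> Sw"
            hence "v \<in> F'" using that sT unfolding F'_def F_def by auto
            hence "v \<in> Sw \<inter> {..s'}" using cs' by simp
            thus False using that by simp
          qed
          have nsw2: "v \<notin> Sw" if "s < v" "v \<le> T" for v
          proof
            assume v: "v \<in> Sw"
            hence "v \<in> F" using that unfolding F_def by auto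
            hence "v \<le> s" by (rule Fle)
            thus False using that by simp
          qed
          have cs1: "\<sigma> u = \<sigma> s'" if "s' \<le> u" "u < s" for u
            by (rule cst_open[of s' u s]) (use that s'0 nsw1 in auto)
          have seg1: "V (\<sigma> s') (x s) \<le> exp (-(2*r)*(s-s')) * V (\<sigma> s') (x s')"
          proof (rule seg)
            show "0 \<le> s'" by (rule s'0)
            show "s' \<le> s" using s's by simp
            fix u assume "s' \<le> u" "u < s"
            thus "\<sigma> u = \<sigma> s'" by (intro cs1) auto
          qed
          have jmp: "V (\<sigma> s) (x s) \<le> L * V (\<sigma> s') (x s)" using jump rng s'0 s0 by simp
          have cs2: "\<sigma> u = \<sigma> s" if "s \<le> u" "u \<le> T" for u
            by (rule cst_closed[of s u T]) (use that s0 nsw2 in auto)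
          have seg2: "V (\<sigma> s) (x T) \<le> exp (-(2*r)*(T-s)) * V (\<sigma> s) (x s)"
          proof (rule seg)
            show "0 \<le> s" using s0 by simp
            show "s \<le> T" by (rule sT)
            fix u assume "s \<le> u" "u < T"
            thus "\<sigma> u = \<sigma> s" by (intro cs2) auto
          qed
          have ch: "V (\<sigma> s) (x T) \<le> (L * L^k) * (exp (-(2*r)*(T-s)) * exp (-(2*r)*(s-s')) * exp (-(2*r) * s')) * V (\<sigma> 0) (x 0)"
            by (rule chain_ineq[OF seg2 jmp seg1 IH(1)]) (use L0 in auto)
          have "exp (-(2*r)*(T-s)) * exp (-(2*r)*(s-s')) * exp (-(2*r) * s') = exp (-(2*r)*(T-s) + -(2*r)*(s-s') + -(2*r) * s')"
            by (simp only: exp_add)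
          also have "-(2*r)*(T-s) + -(2*r)*(s-s') + -(2*r) * s' = -(2*r)*T" by (simp add: algebra_simps)
          finally have ee: "exp (-(2*r)*(T-s)) * exp (-(2*r)*(s-s')) * exp (-(2*r) * s') = exp (-(2*r)*T)" .
          have sTs: "\<sigma> T = \<sigma> s" using cs2[of T] sT by simp
          have dws: "\<tau>D \<le> s - s'" using dw[of s s'] sSw s'Sw s's by simp
          have "V (\<sigma> T) (x T) \<le> L^Suc k * exp (-(2*r)*T) * V (\<sigma> 0) (x 0)"
            using ch unfolding ee sTs by simp
          moreover have "real (Suc k) * \<tau>D \<le> T" using IH(2) dws sT by (simp add: algebra_simps)
          ultimately show "V (\<sigma> T) (x T) \<le> L^Suc k * exp (-(2*r)*T) * V (\<sigma> 0) (x 0) \<and> real (Suc k) * \<tau>D \<le> T"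
            by simp
        qed
      qed
      define k where "k = card (Sw \<inter> {..t})"
      have mk: "V (\<sigma> t) (x t) \<le> L^k * exp (-(2*r)*t) * V (\<sigma> 0) (x 0)" "real k * \<tau>D \<le> t"
        using main[of k] t0 unfolding k_def by auto
      show "norm (x t) \<le> sqrt L * exp (- lam * t) * norm (x 0)"
      proof (rule final_ineq[OF m0 L_def L1 _ mk(1) _ mk(2) tD rb t0])
        show "m * (norm (x t))^2 \<le> V (\<sigma> t) (x t)" using Vlow rng t0 by simp
        show "V (\<sigma> 0) (x 0) \<le> \<beta> * (norm (x 0))^2" using Vup rng by simp
      qed auto
    qed
  qed
qed


end
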